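(* Let $D$ be a connected locally semicomplete digraph in which no inclusion-wise maximal weak hub is mixed. Then either $D$ is semicomplete with a universal vertex, or there exist $k\ge 2$ pairwise disjoint sets $X_1,\dots,X_k$ partitioning $V(D)$ such that each $D[X_i]$ is strongly connected and the digraph obtained by contracting every $X_i$ (vertices $X_1,\dots,X_k$, arc $X_iX_j$ for $i\ne j$ whenever $D$ has an arc from $X_i$ to $X_j$) is a round oriented graph.
   Context: Digraphs are finite, no loops, no parallel arcs; digons allowed; an oriented graph has no digon. $x^+$, $x^-$ are out- and in-neighbourhoods. Connected means the underlying undirected graph is connected. Semicomplete: any two distinct vertices joined by at least one arc; locally semicomplete: every $x^+$ and every $x^-$ induces a semicomplete digraph. A universal vertex is $x$ with $x^+=x^-=V(D)\setminus\{x\}$. A weak hub is a set $X\subseteq V(D)$ with $D[X]$ strongly connected such that some vertex $x$ satisfies $X\subseteq x^-\setminus x^+$ or $X\subseteq x^+\setminus x^-$. A weak hub $X$ is mixed if there exist $x\notin X$ and $u,v\in X$ such that $xu$ and $vx$ are arcs. An oriented graph is round if there is a cyclic order of its vertices such that for every arc $xy$ and every vertex $z$ strictly between $x$ and $y$ going forward from $x$ to $y$ in the cyclic order, both $xz$ and $zy$ are arcs. *)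

theory Defs
  imports Main
begin

definition digraph :: "'a set \<Rightarrow> ('a \<times> 'a) set \<Rightarrow> bool" where
  "digraph V A \<longleftrightarrow> finite V \<and> A \<subseteq> V \<times> V \<and> (\<forall>x. (x, x) \<notin> A)"

definition outN :: "('a \<times> 'a) set \<Rightarrow> 'a \<Rightarrow> 'a set" where
  "outN A x = {y. (x, y) \<in> A}"

definition inN :: "('a \<times> 'a) set \<Rightarrow> 'a \<Rightarrow> 'a set" where
  "inN A x = {y. (y, x) \<in> A}"

definition connected_dg :: "'a set \<Rightarrow> ('a \<times> 'a) set \<Rightarrow> bool" where
  "connected_dg V A \<longleftrightarrow> V \<noteq> {} \<and> (\<forall>u\<in>V. \<forall>v\<in>V. (u, v) \<in> (A \<union> A\<inverse>)\<^sup>*)"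

definition semicomplete :: "'a set \<Rightarrow> ('a \<times> 'a) set \<Rightarrow> bool" where
  "semicomplete X A \<longleftrightarrow> (\<forall>x\<in>X. \<forall>y\<in>X. x \<noteq> y \<longrightarrow> (x, y) \<in> A \<or> (y, x) \<in> A)"

definition locally_semicomplete :: "'a set \<Rightarrow> ('a \<times> 'a) set \<Rightarrow> bool" where
  "locally_semicomplete V A \<longleftrightarrow>
     (\<forall>x\<in>V. semicomplete (outN A x) A \<and> semicomplete (inN A x) A)"

definition strongly_connected :: "'a set \<Rightarrow> ('a \<times> 'a) set \<Rightarrow> bool" where
  "strongly_connected X A \<longleftrightarrow> X \<noteq> {} \<and> (\<forall>u\<in>X. \<forall>v\<in>X. (u, v) \<in> (A \<inter> (X \<times> X))\<^sup>*)"

definition weak_hub :: "'a set \<Rightarrow> ('a \<times> 'a) set \<Rightarrow> 'a set \<Rightarrow> bool" where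
  "weak_hub V A X \<longleftrightarrow> X \<subseteq> V \<and> strongly_connected X A \<and>
     (\<exists>x\<in>V. X \<subseteq> inN A x - outN A x \<or> X \<subseteq> outN A x - inN A x)"

definition maximal_weak_hub :: "'a set \<Rightarrow> ('a \<times> 'a) set \<Rightarrow> 'a set \<Rightarrow> bool" where
  "maximal_weak_hub V A X \<longleftrightarrow> weak_hub V A X \<and> (\<forall>Y. weak_hub V A Y \<and> X \<subseteq> Y \<longrightarrow> Y = X)"

definition mixed :: "'a set \<Rightarrow> ('a \<times> 'a) set \<Rightarrow> 'a set \<Rightarrow> bool" where
  "mixed V A X \<longleftrightarrow> (\<exists>x\<in>V - X. \<exists>u\<in>X. \<exists>v\<in>X. (x, u) \<in> A \<and> (v, x) \<in> A)"

definition universal_vertex :: "'a set \<Rightarrow> ('a \<times> 'a) set \<Rightarrow> 'a \<Rightarrow> bool" where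
  "universal_vertex V A x \<longleftrightarrow> x \<in> V \<and> outN A x = V - {x} \<and> inN A x = V - {x}"

definition oriented :: "('a \<times> 'a) set \<Rightarrow> bool" where
  "oriented A \<longleftrightarrow> (\<forall>x y. (x, y) \<in> A \<longrightarrow> (y, x) \<notin> A)"

text \<open>Round: there is a cyclic order f 0, ..., f (n-1) of the vertices such that for
  every arc f i f j and every f m strictly between f i and f j going forward,
  f i f m and f m f j are arcs.\<close>
definition round :: "'a set \<Rightarrow> ('a \<times> 'a) set \<Rightarrow> bool" where
  "round V A \<longleftrightarrow> oriented A \<and>
     (\<exists>f. bij_betw f {..<card V} V \<and>
        (\<forall>i<card V. \<forall>j<card V. \<forall>m<card V.
           (f i, f j) \<in> A \<and> 0 < (m + card V - i) mod card V \<and>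
           (m + card V - i) mod card V < (j + card V - i) mod card V
           \<longrightarrow> (f i, f m) \<in> A \<and> (f m, f j) \<in> A))"

definition contract_arcs :: "'a set set \<Rightarrow> ('a \<times> 'a) set \<Rightarrow> ('a set \<times> 'a set) set" where
  "contract_arcs P A = {(X, Y). X \<in> P \<and> Y \<in> P \<and> X \<noteq> Y \<and> (\<exists>u\<in>X. \<exists>v\<in>Y. (u, v) \<in> A)}"

end

theory Submission
  imports Defs
begin

definition cb :: "nat \<Rightarrow> nat \<Rightarrow> nat \<Rightarrow> bool" where
  "cb i m j \<longleftrightarrow> (i < m \<and> m < j) \<or> (j < i \<and> (i < m \<or> m < j))"

definition rnd :: "nat \<Rightarrow> ('b \<times> 'b) set \<Rightarrow> (nat \<Rightarrow> 'b) \<Rightarrow> bool" where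
  "rnd n E f \<longleftrightarrow> (\<forall>i<n. \<forall>j<n. \<forall>m<n. (f i, f j) \<in> E \<and> cb i m j \<longrightarrow> (f i, f m) \<in> E \<and> (f m, f j) \<in> E)"

definition no3 :: "('b \<times> 'b) set \<Rightarrow> bool" where
  "no3 E \<longleftrightarrow> (\<forall>x a b c. (x,a) \<in> E \<longrightarrow> (x,b) \<in> E \<longrightarrow> (x,c) \<in> E \<longrightarrow> (a,b) \<in> E \<longrightarrow> (b,c) \<in> E \<longrightarrow> (c,a) \<in> E \<longrightarrow> False)
     \<and> (\<forall>x a b c. (a,x) \<in> E \<longrightarrow> (b,x) \<in> E \<longrightarrow> (c,x) \<in> E \<longrightarrow> (a,b) \<in> E \<longrightarrow> (b,c) \<in> E \<longrightarrow> (c,a) \<in> E \<longrightarrow> False)"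

definition ltour :: "'b set \<Rightarrow> ('b \<times> 'b) set \<Rightarrow> bool" where
  "ltour W E \<longleftrightarrow> (\<forall>x\<in>W. \<forall>a\<in>W. \<forall>b\<in>W. a \<noteq> b \<longrightarrow> (((x,a) \<in> E \<and> (x,b) \<in> E) \<or> ((a,x) \<in> E \<and> (b,x) \<in> E)) \<longrightarrow> (a,b) \<in> E \<or> (b,a) \<in> E)"

definition conn :: "'b set \<Rightarrow> ('b \<times> 'b) set \<Rightarrow> bool" where
  "conn S E \<longleftrightarrow> (\<forall>u\<in>S. \<forall>w\<in>S. (u, w) \<in> ((E \<inter> S \<times> S) \<union> (E \<inter> S \<times> S)\<inverse>)\<^sup>*)"

lemma fd_btw:
  assumes "i < n" "m < n" "j < n"
  shows "(0 < (m + n - i) mod n \<and> (m + n - i) mod n < (j + n - i) mod n) \<longleftrightarrow> cb i m j"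
proof -
  have a: "(x + n - i) mod n = (if i \<le> x then x - i else x + n - i)" if "x < n" for x
  proof (cases "i \<le> x")
    case True
    then have "x + n - i = (x - i) + n" using assms by simp
    then have "(x + n - i) mod n = (x - i) mod n" by simp
    also have "\<dots> = x - i" using that by simp
    finally show ?thesis using True by simp
  next
    case False
    then show ?thesis using assms that by simp
  qed
  show ?thesis
  proof (cases "i \<le> m")
    case True
    then show ?thesis using a[OF assms(2)] a[OF assms(3)] assms unfolding cb_def
      by (cases "i \<le> j") auto
  next
    case False
    then show ?thesis using a[OF assms(2)] a[OF assms(3)] assms unfolding cb_def
      by (cases "i \<le> j") auto
  qed
qed

lemma rnd_rev:
  assumes "rnd n E f"
  shows "rnd n (E\<inverse>) (\<lambda>k. f (n - 1 - k))"
  unfolding rnd_def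
proof (intro allI impI)
  fix i j m assume h: "i < n" "j < n" "m < n" "(f (n - 1 - i), f (n - 1 - j)) \<in> E\<inverse> \<and> cb i m j"
  have c: "cb (n - 1 - j) (n - 1 - m) (n - 1 - i)" using h unfolding cb_def by auto
  have "(f (n - 1 - j), f (n - 1 - i)) \<in> E" using h by auto
  with assms c show "(f (n - 1 - i), f (n - 1 - m)) \<in> E\<inverse> \<and> (f (n - 1 - m), f (n - 1 - j)) \<in> E\<inverse>"
  proof -
    have b: "n - 1 - i < n" "n - 1 - j < n" "n - 1 - m < n" using h by auto
    have "(f (n - 1 - j), f (n - 1 - m)) \<in> E \<and> (f (n - 1 - m), f (n - 1 - i)) \<in> E"
      using assms b c \<open>(f (n - 1 - j), f (n - 1 - i)) \<in> E\<close> unfolding rnd_def by blast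
    then show ?thesis by simp
  qed
qed

lemma bij_rev:
  fixes n :: nat
  assumes "bij_betw f {..<n} S"
  shows "bij_betw (\<lambda>k. f (n - 1 - k)) {..<n} S"
proof -
  have "bij_betw (\<lambda>k. n - 1 - k) {..<n} {..<n}"
    apply (rule bij_betw_byWitness[where f'="\<lambda>k. n - 1 - k"])
    by auto
  from bij_betw_trans[OF this assms] show ?thesis by (simp add: comp_def)
qed

definition rot :: "nat \<Rightarrow> nat \<Rightarrow> nat \<Rightarrow> nat" where
  "rot n p k = (if k + p < n then k + p else k + p - n)"

lemma rnd_rot:
  assumes "rnd n E f" "p < n"
  shows "rnd n E (\<lambda>k. f (rot n p k))"
  unfolding rnd_def
proof (intro allI impI)
  fix i j m assume h: "i < n" "j < n" "m < n" "(f (rot n p i), f (rot n p j)) \<in> E \<and> cb i m j"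
  have c: "cb (rot n p i) (rot n p m) (rot n p j)"
  proof -
    have cij: "cb i m j" using h by simp
    show ?thesis
      unfolding rot_def
      apply (cases "i + p < n"; cases "m + p < n"; cases "j + p < n")
      using cij h(1-3) assms(2) unfolding cb_def by auto
  qed
  have l: "rot n p x < n" if "x < n" for x using that assms(2) unfolding rot_def by auto
  show "(f (rot n p i), f (rot n p m)) \<in> E \<and> (f (rot n p m), f (rot n p j)) \<in> E"
    using assms(1) c h l[OF h(1)] l[OF h(2)] l[OF h(3)] unfolding rnd_def by blast
qed

lemma bij_rot:
  assumes "bij_betw f {..<n} S" "p < n"
  shows "bij_betw (\<lambda>k. f (rot n p k)) {..<n} S"
proof -
  have "bij_betw (rot n p) {..<n} {..<n}"
    by (rule bij_betw_byWitness[where f'="\<lambda>k. if p \<le> k then k - p else k + n - p"]) (use assms(2) in \<open>auto simp: rot_def\<close>)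
  from bij_betw_trans[OF this assms(1)] show ?thesis by (simp add: comp_def)
qed

lemma lt_out: "ltour W E \<Longrightarrow> x\<in>W \<Longrightarrow> a\<in>W \<Longrightarrow> b\<in>W \<Longrightarrow> a\<noteq>b \<Longrightarrow> (x,a)\<in>E \<Longrightarrow> (x,b)\<in>E \<Longrightarrow> (a,b)\<in>E \<or> (b,a)\<in>E"
  unfolding ltour_def by blast
lemma lt_in: "ltour W E \<Longrightarrow> x\<in>W \<Longrightarrow> a\<in>W \<Longrightarrow> b\<in>W \<Longrightarrow> a\<noteq>b \<Longrightarrow> (a,x)\<in>E \<Longrightarrow> (b,x)\<in>E \<Longrightarrow> (a,b)\<in>E \<or> (b,a)\<in>E"
  unfolding ltour_def by blast
lemma n3_out: "no3 E \<Longrightarrow> (x,a) \<in> E \<Longrightarrow> (x,b) \<in> E \<Longrightarrow> (x,c) \<in> E \<Longrightarrow> (a,b) \<in> E \<Longrightarrow> (b,c) \<in> E \<Longrightarrow> (c,a) \<in> E \<Longrightarrow> False"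
  unfolding no3_def by blast
lemma n3_in: "no3 E \<Longrightarrow> (a,x) \<in> E \<Longrightarrow> (b,x) \<in> E \<Longrightarrow> (c,x) \<in> E \<Longrightarrow> (a,b) \<in> E \<Longrightarrow> (b,c) \<in> E \<Longrightarrow> (c,a) \<in> E \<Longrightarrow> False"
  unfolding no3_def by blast

lemma rtrancl_cross:
  assumes "(u, w) \<in> r\<^sup>*" "u \<in> X" "w \<notin> X"
  shows "\<exists>a b. (a, b) \<in> r \<and> a \<in> X \<and> b \<notin> X"
  using assms
proof (induction rule: rtrancl_induct)
  case base
  then show ?case by simp
next
  case (step y z)
  then show ?case by (cases "y \<in> X") auto
qed

lemma rnd_use: "rnd n E f \<Longrightarrow> i < n \<Longrightarrow> j < n \<Longrightarrow> m < n \<Longrightarrow> (f i, f j) \<in> E \<Longrightarrow> cb i m j \<Longrightarrow> (f i, f m) \<in> E \<and> (f m, f j) \<in> E"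
  unfolding rnd_def by blast

locale ins =
  fixes W :: "'b set" and E :: "('b \<times> 'b) set" and S :: "'b set" and v :: 'b and f :: "nat \<Rightarrow> 'b" and n :: nat
  assumes bij: "bij_betw f {..<n} S"
  and rnd: "rnd n E f"
  and vS: "v \<notin> S"
  and ori: "\<And>a b. (a,b)\<in>E \<Longrightarrow> (b,a)\<notin>E"
  and lt: "ltour W E" and sub: "insert v S \<subseteq> W"
  and n3: "no3 E"
  and cn: "conn S E"
  and vs: "(v, f 0) \<in> E"
  and src: "\<And>w. w\<in>S \<Longrightarrow> (v,w)\<in>E \<Longrightarrow> w \<noteq> f 0 \<Longrightarrow> (f 0, w) \<in> E"
  and npos: "0 < n"
begin

lemma fS: "k < n \<Longrightarrow> f k \<in> S"
  using bij by (auto simp: bij_betw_def)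
lemma fW: "k < n \<Longrightarrow> f k \<in> W"
  using fS sub by auto
lemma vW: "v \<in> W" using sub by auto
lemma finj: "k < n \<Longrightarrow> l < n \<Longrightarrow> f k = f l \<longleftrightarrow> k = l"
  using bij by (auto simp: bij_betw_def inj_on_def)
lemma fv: "k < n \<Longrightarrow> f k \<noteq> v" using fS vS by auto

lemma keyL:
  assumes i0: "i0 < n" "(f i0, v) \<in> E"
  shows "(f (n - 1), v) \<in> E"
proof -
  define K where "K = {k. k < n \<and> ((f k, v) \<in> E \<or> (v, f k) \<in> E)}"
  have finK: "finite K" unfolding K_def by auto
  have "0 \<in> K" unfolding K_def using npos vs by blast
  then have Kne: "K \<noteq> {}" by auto
  define k where "k = Max K"
  have kK: "k \<in> K" unfolding k_def using Max_in[OF finK Kne] .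
  have kmax: "\<And>l. l \<in> K \<Longrightarrow> l \<le> k" unfolding k_def using Max_ge[OF finK] by auto
  have kn: "k < n" using kK unfolding K_def by auto
  have i0K: "i0 \<in> K" unfolding K_def using i0 by auto
  then have i0k: "i0 \<le> k" using kmax by auto
  have i0nz: "i0 \<noteq> 0"
  proof
    assume "i0 = 0"
    then show False using i0(2) vs ori by blast
  qed
  have fk: "(f k, v) \<in> E"
  proof (rule ccontr)
    assume "(f k, v) \<notin> E"
    then have vk: "(v, f k) \<in> E" using kK unfolding K_def by auto
    have "i0 \<noteq> k" using vk i0(2) ori by blast
    then have lt1: "0 < i0" "i0 < k" using i0nz i0k by auto
    have "f k \<noteq> f 0" using finj[OF kn npos] lt1 by auto
    then have "(f 0, f k) \<in> E" using src[OF fS[OF kn] vk] by auto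
    moreover have "cb 0 i0 k" unfolding cb_def using lt1 by auto
    ultimately have "(f 0, f i0) \<in> E \<and> (f i0, f k) \<in> E" using rnd_use[OF rnd npos kn i0(1)] by auto
    then show False using n3_in[OF n3 vk \<open>(f 0, f k) \<in> E\<close> _ vs _ i0(2)] by auto
  qed
  have "k = n - 1"
  proof (rule ccontr)
    assume "k \<noteq> n - 1"
    then have kl: "k < n - 1" using kn by auto
    have "f 0 \<in> S" "f (n - 1) \<in> S" using fS npos by auto
    then have "(f 0, f (n - 1)) \<in> ((E \<inter> S \<times> S) \<union> (E \<inter> S \<times> S)\<inverse>)\<^sup>*" using cn unfolding conn_def by auto
    moreover have h0: "f 0 \<in> f ` {..k}" by auto
    moreover have hn: "f (n - 1) \<notin> f ` {..k}"
    proof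
      assume "f (n - 1) \<in> f ` {..k}"
      then obtain l where "l \<le> k" "f (n - 1) = f l" by auto
      then show False using finj[of "n - 1" l] kl kn by auto
    qed
    ultimately have "\<exists>a b. (a, b) \<in> (E \<inter> S \<times> S) \<union> (E \<inter> S \<times> S)\<inverse> \<and> a \<in> f ` {..k} \<and> b \<notin> f ` {..k}"
      by (rule rtrancl_cross)
    then obtain a b where ab: "(a, b) \<in> (E \<inter> S \<times> S) \<union> (E \<inter> S \<times> S)\<inverse>" "a \<in> f ` {..k}" "b \<notin> f ` {..k}"
      by blast
    obtain \<alpha> where al: "\<alpha> \<le> k" "a = f \<alpha>" using ab(2) by auto
    have "b \<in> S" using ab(1) by auto
    then obtain \<beta> where be: "\<beta> < n" "b = f \<beta>" using bij unfolding bij_betw_def by auto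
    have bk: "k < \<beta>"
    proof (rule ccontr)
      assume "\<not> k < \<beta>"
      then have "\<beta> \<in> {..k}" by simp
      then have "b \<in> f ` {..k}" using be by simp
      with ab(3) show False by simp
    qed
    have alpha_n: "\<alpha> < n" using al kn by auto
    have "\<beta> \<notin> K"
    proof
      assume "\<beta> \<in> K"
      then have "\<beta> \<le> k" by (rule kmax)
      with bk show False by simp
    qed
    then have bnadj: "(f \<beta>, v) \<notin> E" "(v, f \<beta>) \<notin> E" unfolding K_def using be by auto
    have "(f \<alpha>, f \<beta>) \<in> E \<or> (f \<beta>, f \<alpha>) \<in> E" using ab(1) al be by auto
    then show False
    proof
      assume e: "(f \<alpha>, f \<beta>) \<in> E"
      have "(f k, f \<beta>) \<in> E"
      proof (cases "\<alpha> = k")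
        case True then show ?thesis using e by simp
      next
        case False
        then have "cb \<alpha> k \<beta>" unfolding cb_def using al bk by auto
        then show ?thesis using rnd_use[OF rnd alpha_n be(1) kn e] by auto
      qed
      then show False using lt_out[OF lt fW[OF kn] fW[OF be(1)] vW fv[OF be(1)] _ fk] bnadj by auto
    next
      assume e: "(f \<beta>, f \<alpha>) \<in> E"
      have "(f \<beta>, f 0) \<in> E"
      proof (cases "\<alpha> = 0")
        case True then show ?thesis using e by simp
      next
        case False
        then have "cb \<beta> 0 \<alpha>" unfolding cb_def using al bk by auto
        then show ?thesis using rnd_use[OF rnd be(1) alpha_n npos e] by auto
      qed
      then show False using lt_in[OF lt fW[OF npos] fW[OF be(1)] vW fv[OF be(1)] _ vs] bnadj by auto
    qed
  qed
  then show ?thesis using fk by simp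
qed


lemma f0nz: "k < n \<Longrightarrow> k \<noteq> 0 \<Longrightarrow> f k \<noteq> f 0"
  using finj[of k 0] npos by auto

lemma ins_rnd: "rnd (Suc n) E (\<lambda>k. if k < n then f k else v)"
  unfolding rnd_def
proof (intro allI impI)
  fix i j m
  assume i: "i < Suc n" and j: "j < Suc n" and m: "m < Suc n"
  define g where "g = (\<lambda>k. if k < n then f k else v)"
  assume H0: "((\<lambda>k. if k < n then f k else v) i, (\<lambda>k. if k < n then f k else v) j) \<in> E \<and> cb i m j"
  then have H: "(g i, g j) \<in> E" "cb i m j" unfolding g_def by auto
  have "(g i, g m) \<in> E \<and> (g m, g j) \<in> E"
  proof -
    consider (A) "i = n" | (B) "j = n" "i < n" | (C) "m = n" "i < n" "j < n" | (D) "i < n" "j < n" "m < n"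
      using i j m by linarith
    then show ?thesis
    proof cases
      case A
      have "j \<noteq> n"
      proof
        assume "j = n" then have "(v, v) \<in> E" using H A unfolding g_def by simp
        then show False using ori by blast
      qed
      then have jn: "j < n" using j by simp
      have mj: "m < j" using H(2) A jn m unfolding cb_def by auto
      then have mn: "m < n" using jn by simp
      have e: "(v, f j) \<in> E" using H A jn unfolding g_def by simp
      have jz: "j \<noteq> 0" using mj by simp
      have e0: "(f 0, f j) \<in> E" using src[OF fS[OF jn] e] f0nz[OF jn jz] by blast
      have "(v, f m) \<in> E \<and> (f m, f j) \<in> E"
      proof (cases "m = 0")
        case True then show ?thesis using vs e0 by simp
      next
        case False
        then have "cb 0 m j" unfolding cb_def using mj by auto
        then have r: "(f 0, f m) \<in> E" "(f m, f j) \<in> E" using rnd_use[OF rnd npos jn mn e0] by auto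
        have "(v, f m) \<in> E \<or> (f m, v) \<in> E" using lt_in[OF lt fW[OF jn] vW fW[OF mn] _ e r(2)] fv[OF mn] by metis
        moreover have "(f m, v) \<notin> E"
        proof
          assume "(f m, v) \<in> E"
          then show False using n3_in[OF n3 e e0 r(2) vs r(1)] by blast
        qed
        ultimately show ?thesis using r by blast
      qed
      then show ?thesis unfolding g_def using A jn mn by simp
    next
      case B
      have im: "i < m" "m < n" using H(2) B m unfolding cb_def by auto
      have e: "(f i, v) \<in> E" using H B unfolding g_def by simp
      have L: "(f (n - 1), v) \<in> E" by (rule keyL[OF B(2) e])
      have inz: "i \<noteq> 0"
      proof
        assume "i = 0" then show False using e vs ori by blast
      qed
      have n1: "n - 1 < n" using npos by simp
      have e1: "(f i, f (n - 1)) \<in> E"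
      proof -
        have "f i \<noteq> f (n - 1)" using finj[OF B(2) n1] im by auto
        then have "(f i, f (n - 1)) \<in> E \<or> (f (n - 1), f i) \<in> E"
          using lt_in[OF lt vW fW[OF B(2)] fW[OF n1] _ e L] by blast
        moreover have "(f (n - 1), f i) \<notin> E"
        proof
          assume a: "(f (n - 1), f i) \<in> E"
          have "cb (n - 1) 0 i" unfolding cb_def using im inz by auto
          then have r: "(f (n - 1), f 0) \<in> E" "(f 0, f i) \<in> E" using rnd_use[OF rnd n1 B(2) npos a] by auto
          show False using n3_out[OF n3 L r(1) a vs r(2) e] .
        qed
        ultimately show ?thesis by blast
      qed
      have "(f i, f m) \<in> E \<and> (f m, v) \<in> E"
      proof (cases "m = n - 1")
        case True then show ?thesis using e1 L by simp
      next
        case False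
        then have "cb i m (n - 1)" unfolding cb_def using im by auto
        then have r: "(f i, f m) \<in> E" "(f m, f (n - 1)) \<in> E" using rnd_use[OF rnd B(2) n1 im(2) e1] by auto
        have "(v, f m) \<in> E \<or> (f m, v) \<in> E" using lt_out[OF lt fW[OF B(2)] vW fW[OF im(2)] _ e r(1)] fv[OF im(2)] by metis
        moreover have "(v, f m) \<notin> E"
        proof
          assume a: "(v, f m) \<in> E"
          show False using n3_out[OF n3 e r(1) e1 a r(2) L] .
        qed
        ultimately show ?thesis using r by blast
      qed
      then show ?thesis unfolding g_def using B im by simp
    next
      case C
      have ji: "j < i" using H(2) C unfolding cb_def by auto
      have e: "(f i, f j) \<in> E" using H C unfolding g_def by simp
      have n0: "0 < n" by (rule npos)
      have ei0: "(f i, f 0) \<in> E"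
      proof (cases "j = 0")
        case True then show ?thesis using e by simp
      next
        case False
        then have "cb i 0 j" unfolding cb_def using ji by auto
        then show ?thesis using rnd_use[OF rnd C(2) C(3) n0 e] by auto
      qed
      have inz: "i \<noteq> 0" using ji by simp
      have eiv: "(f i, v) \<in> E"
      proof -
        have "(f i, v) \<in> E \<or> (v, f i) \<in> E" using lt_in[OF lt fW[OF n0] fW[OF C(2)] vW fv[OF C(2)] ei0 vs] .
        moreover have "(v, f i) \<notin> E"
        proof
          assume "(v, f i) \<in> E"
          then have "(f 0, f i) \<in> E" using src[OF fS[OF C(2)]] f0nz[OF C(2) inz] by blast
          then show False using ei0 ori by blast
        qed
        ultimately show ?thesis by blast
      qed
      have evj: "(v, f j) \<in> E"
      proof (cases "j = 0")
        case True then show ?thesis using vs by simp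
      next
        case False
        then have "cb i 0 j" unfolding cb_def using ji by auto
        then have r: "(f 0, f j) \<in> E" using rnd_use[OF rnd C(2) C(3) n0 e] by auto
        have "(v, f j) \<in> E \<or> (f j, v) \<in> E" using lt_out[OF lt fW[OF C(2)] vW fW[OF C(3)] _ eiv e] fv[OF C(3)] by metis
        moreover have "(f j, v) \<notin> E"
        proof
          assume a: "(f j, v) \<in> E"
          show False using n3_out[OF n3 eiv ei0 e vs r a] .
        qed
        ultimately show ?thesis by blast
      qed
      then show ?thesis unfolding g_def using C eiv by simp
    next
      case D
      then show ?thesis using rnd_use[OF rnd D(1) D(2) D(3)] H unfolding g_def by simp
    qed
  qed
  then show "((\<lambda>k. if k < n then f k else v) i, (\<lambda>k. if k < n then f k else v) m) \<in> E \<and>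
             ((\<lambda>k. if k < n then f k else v) m, (\<lambda>k. if k < n then f k else v) j) \<in> E"
    unfolding g_def .
qed

lemma ins_bij: "bij_betw (\<lambda>k. if k < n then f k else v) {..<Suc n} (insert v S)"
  unfolding bij_betw_def
proof
  show "inj_on (\<lambda>k. if k < n then f k else v) {..<Suc n}"
    unfolding inj_on_def using finj fv by (auto split: if_splits)
  show "(\<lambda>k. if k < n then f k else v) ` {..<Suc n} = insert v S"
  proof
    show "(\<lambda>k. if k < n then f k else v) ` {..<Suc n} \<subseteq> insert v S" using fS by auto
    show "insert v S \<subseteq> (\<lambda>k. if k < n then f k else v) ` {..<Suc n}"
    proof
      fix x assume "x \<in> insert v S"
      then show "x \<in> (\<lambda>k. if k < n then f k else v) ` {..<Suc n}"
      proof
        assume "x = v" then show ?thesis by (intro image_eqI[where x=n]) auto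
      next
        assume "x \<in> S"
        then obtain k where "k < n" "x = f k" using bij unfolding bij_betw_def by auto
        then show ?thesis by (intro image_eqI[where x=k]) auto
      qed
    qed
  qed
qed

end


lemma source_ex:
  assumes "finite M" "M \<noteq> {}"
    and tour: "\<forall>a\<in>M. \<forall>b\<in>M. a \<noteq> b \<longrightarrow> (a,b)\<in>E \<or> (b,a)\<in>E"
    and tr: "\<forall>a b c. a\<in>M \<longrightarrow> b\<in>M \<longrightarrow> c\<in>M \<longrightarrow> (a,b)\<in>E \<longrightarrow> (b,c)\<in>E \<longrightarrow> (a,c)\<in>E"
  shows "\<exists>s\<in>M. \<forall>w\<in>M. w \<noteq> s \<longrightarrow> (s,w)\<in>E"
  using assms(1,2,3,4)
proof (induction M rule: finite_ne_induct)
  case (singleton x)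
  show ?case by blast
next
  case (insert x F)
  have t1: "\<forall>a\<in>F. \<forall>b\<in>F. a \<noteq> b \<longrightarrow> (a,b)\<in>E \<or> (b,a)\<in>E" using insert.prems(1) by blast
  have t2: "\<forall>a b c. a\<in>F \<longrightarrow> b\<in>F \<longrightarrow> c\<in>F \<longrightarrow> (a,b)\<in>E \<longrightarrow> (b,c)\<in>E \<longrightarrow> (a,c)\<in>E" using insert.prems(2) by blast
  obtain s' where s': "s' \<in> F" "\<forall>w\<in>F. w \<noteq> s' \<longrightarrow> (s',w)\<in>E" using insert.IH[OF t1 t2] by blast
  have xs: "x \<noteq> s'" using insert.hyps s'(1) by auto
  have "(x,s') \<in> E \<or> (s',x) \<in> E" using insert.prems(1) s'(1) xs by blast
  then show ?case
  proof
    assume a: "(x,s') \<in> E"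
    have "\<forall>w\<in>insert x F. w \<noteq> x \<longrightarrow> (x,w)\<in>E"
    proof (intro ballI impI)
      fix w assume w: "w \<in> insert x F" "w \<noteq> x"
      then have wF: "w \<in> F" by simp
      show "(x,w) \<in> E"
      proof (cases "w = s'")
        case True then show ?thesis using a by simp
      next
        case False
        then have sw: "(s',w) \<in> E" using s'(2) wF by blast
        have "x \<in> insert x F" "s' \<in> insert x F" "w \<in> insert x F" using s'(1) wF by auto
        then show ?thesis using insert.prems(2) a sw by blast
      qed
    qed
    then show ?thesis by blast
  next
    assume a: "(s',x) \<in> E"
    have "\<forall>w\<in>insert x F. w \<noteq> s' \<longrightarrow> (s',w)\<in>E" using a s'(2) by blast
    then show ?thesis using s'(1) by blast
  qed
qed

lemma ltour_conv: "ltour W E \<Longrightarrow> ltour W (E\<inverse>)"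
  unfolding ltour_def by blast
lemma no3_conv: "no3 E \<Longrightarrow> no3 (E\<inverse>)"
  unfolding no3_def by blast
lemma conn_conv: "conn S E \<Longrightarrow> conn S (E\<inverse>)"
proof -
  have "((E\<inverse> \<inter> S \<times> S) \<union> (E\<inverse> \<inter> S \<times> S)\<inverse>) = ((E \<inter> S \<times> S) \<union> (E \<inter> S \<times> S)\<inverse>)" by auto
  then show "conn S E \<Longrightarrow> conn S (E\<inverse>)" unfolding conn_def by simp
qed

lemma ins_out:
  assumes bij: "bij_betw f {..<n} S"
  and rnd: "rnd n E f"
  and vS: "v \<notin> S"
  and ori: "\<And>a b. (a,b)\<in>E \<Longrightarrow> (b,a)\<notin>E"
  and lt: "ltour W E" and sub: "insert v S \<subseteq> W"
  and n3: "no3 E"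
  and cn: "conn S E"
  and npos: "0 < n"
  and u: "u \<in> S" "(v, u) \<in> E"
  shows "\<exists>g. bij_betw g {..<Suc n} (insert v S) \<and> rnd (Suc n) E g"
proof -
  define M where "M = {w\<in>S. (v,w)\<in>E}"
  have fin: "finite S" using bij bij_betw_finite by blast
  have "\<exists>s\<in>M. \<forall>w\<in>M. w \<noteq> s \<longrightarrow> (s,w)\<in>E"
  proof (rule source_ex)
    show "finite M" unfolding M_def using fin by simp
    show "M \<noteq> {}" unfolding M_def using u by blast
    show "\<forall>a\<in>M. \<forall>b\<in>M. a \<noteq> b \<longrightarrow> (a,b)\<in>E \<or> (b,a)\<in>E"
      unfolding M_def using lt_out[OF lt] sub by blast
    show "\<forall>a b c. a\<in>M \<longrightarrow> b\<in>M \<longrightarrow> c\<in>M \<longrightarrow> (a,b)\<in>E \<longrightarrow> (b,c)\<in>E \<longrightarrow> (a,c)\<in>E"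
    proof (intro allI impI)
      fix a b c assume h: "a\<in>M" "b\<in>M" "c\<in>M" "(a,b)\<in>E" "(b,c)\<in>E"
      have "a \<noteq> c" using h(4,5) ori by blast
      then have "(a,c)\<in>E \<or> (c,a)\<in>E" using h(1,3) unfolding M_def using lt_out[OF lt, of v a c] sub by blast
      moreover have "(c,a) \<notin> E"
      proof
        assume "(c,a) \<in> E"
        then show False using n3_out[OF n3, of v a b c] h unfolding M_def by blast
      qed
      ultimately show "(a,c)\<in>E" by blast
    qed
  qed
  then obtain s where s: "s \<in> S" "(v,s) \<in> E" "\<And>w. w\<in>S \<Longrightarrow> (v,w)\<in>E \<Longrightarrow> w \<noteq> s \<Longrightarrow> (s,w)\<in>E"
    unfolding M_def by blast
  obtain p where p: "p < n" "f p = s" using s(1) bij unfolding bij_betw_def by auto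
  define f' where "f' = (\<lambda>k. f (rot n p k))"
  have f'0: "f' 0 = s" unfolding f'_def rot_def using p by simp
  have b': "bij_betw f' {..<n} S" unfolding f'_def by (rule bij_rot[OF bij p(1)])
  have r': "rnd n E f'" unfolding f'_def by (rule rnd_rot[OF rnd p(1)])
  interpret I: ins W E S v f' n
    apply unfold_locales
    using b' r' vS lt sub n3 cn npos f'0 s(2) apply simp_all
    using ori s(3) f'0 by blast+
  show ?thesis using I.ins_bij I.ins_rnd by blast
qed

lemma insertion:
  assumes bij: "bij_betw f {..<n} S"
  and rnd: "rnd n E f"
  and vS: "v \<notin> S"
  and ori: "\<And>a b. (a,b)\<in>E \<Longrightarrow> (b,a)\<notin>E"
  and lt: "ltour W E" and sub: "insert v S \<subseteq> W"
  and n3: "no3 E"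
  and cn: "conn S E"
  and npos: "0 < n"
  and u: "u \<in> S" "(v, u) \<in> E \<or> (u, v) \<in> E"
  shows "\<exists>g. bij_betw g {..<Suc n} (insert v S) \<and> rnd (Suc n) E g"
proof (cases "(v, u) \<in> E")
  case True
  then show ?thesis using ins_out[OF assms(1-9) u(1)] by blast
next
  case False
  then have vu: "(v, u) \<in> E\<inverse>" using u by simp
  have ori': "\<And>a b. (a,b)\<in>E\<inverse> \<Longrightarrow> (b,a)\<notin>E\<inverse>" using ori by blast
  obtain g where g: "bij_betw g {..<Suc n} (insert v S)" "rnd (Suc n) (E\<inverse>) g"
    using ins_out[OF bij_rev[OF bij] rnd_rev[OF rnd] vS ori' ltour_conv[OF lt] sub no3_conv[OF n3] conn_conv[OF cn] npos u(1) vu]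
    by blast
  have "rnd (Suc n) E (\<lambda>k. g (Suc n - 1 - k))" using rnd_rev[OF g(2)] by simp
  then show ?thesis using bij_rev[OF g(1)] by blast
qed

lemma conn_insert:
  assumes "conn S E" "a \<in> S" "(a,b)\<in>E \<or> (b,a)\<in>E"
  shows "conn (insert b S) E"
proof -
  let ?R = "(E \<inter> S \<times> S) \<union> (E \<inter> S \<times> S)\<inverse>"
  let ?R' = "(E \<inter> insert b S \<times> insert b S) \<union> (E \<inter> insert b S \<times> insert b S)\<inverse>"
  have mono: "?R\<^sup>* \<subseteq> ?R'\<^sup>*" by (rule rtrancl_mono) auto
  have ab: "(a,b) \<in> ?R'" "(b,a) \<in> ?R'" using assms(2,3) by auto
  have inS: "\<And>x y. x\<in>S \<Longrightarrow> y\<in>S \<Longrightarrow> (x,y) \<in> ?R'\<^sup>*" using assms(1) mono unfolding conn_def by blast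
  show ?thesis unfolding conn_def
  proof (intro ballI)
    fix x y assume x: "x \<in> insert b S" and y: "y \<in> insert b S"
    have xb: "(x, b) \<in> ?R'\<^sup>*"
    proof (cases "x = b")
      case True then show ?thesis by simp
    next
      case False then have "x \<in> S" using x by simp
      then show ?thesis using inS[OF _ assms(2)] ab(1) by (meson rtrancl.rtrancl_into_rtrancl)
    qed
    have by': "(b, y) \<in> ?R'\<^sup>*"
    proof (cases "y = b")
      case True then show ?thesis by simp
    next
      case False then have "y \<in> S" using y by simp
      then show ?thesis using inS[OF assms(2)] ab(2) by (meson converse_rtrancl_into_rtrancl)
    qed
    show "(x, y) \<in> ?R'\<^sup>*" using xb by' by (rule rtrancl_trans)
  qed
qed

theorem round_main:
  assumes fin: "finite W" and ne: "W \<noteq> {}" and sub: "E \<subseteq> W \<times> W"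
    and ori: "\<And>a b. (a,b)\<in>E \<Longrightarrow> (b,a)\<notin>E"
    and lt: "ltour W E" and n3: "no3 E" and cd: "connected_dg W E"
  shows "round W E"
proof -
  have claim: "\<forall>k. 1 \<le> k \<longrightarrow> k \<le> card W \<longrightarrow> (\<exists>S f. S \<subseteq> W \<and> card S = k \<and> conn S E \<and> bij_betw f {..<k} S \<and> rnd k E f)"
  proof (intro allI)
    fix k show "1 \<le> k \<longrightarrow> k \<le> card W \<longrightarrow> (\<exists>S f. S \<subseteq> W \<and> card S = k \<and> conn S E \<and> bij_betw f {..<k} S \<and> rnd k E f)"
    proof (induction k)
      case 0
      then show ?case by simp
    next
      case (Suc k)
      show ?case
      proof (intro impI)
        assume k1: "Suc k \<le> card W"
        show "\<exists>S f. S \<subseteq> W \<and> card S = Suc k \<and> conn S E \<and> bij_betw f {..<Suc k} S \<and> rnd (Suc k) E f"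
        proof (cases "k = 0")
          case True
          obtain r where r: "r \<in> W" using ne by blast
          have "conn {r} E" unfolding conn_def by simp
          moreover have "bij_betw (\<lambda>_. r) {..<Suc 0} {r}" unfolding bij_betw_def inj_on_def by auto
          moreover have "rnd (Suc 0) E (\<lambda>_. r)" unfolding rnd_def cb_def by simp
          ultimately show ?thesis using True r by (intro exI[of _ "{r}"] exI[of _ "\<lambda>_. r"]) auto
        next
          case False
          then obtain S f where S: "S \<subseteq> W" "card S = k" "conn S E" "bij_betw f {..<k} S" "rnd k E f"
            using Suc.IH k1 by auto
          have finS: "finite S" using S(1) fin finite_subset by blast
          have "S \<noteq> W" using S(2) k1 by auto
          then obtain w where w: "w \<in> W" "w \<notin> S" using S(1) by blast
          have "S \<noteq> {}" using S(2) False by auto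
          then obtain r where r: "r \<in> S" by blast
          have "(r, w) \<in> (E \<union> E\<inverse>)\<^sup>*" using cd r w S(1) unfolding connected_dg_def by blast
                  then have "\<exists>a b. (a, b) \<in> E \<union> E\<inverse> \<and> a \<in> S \<and> b \<notin> S" by (rule rtrancl_cross[OF _ r w(2)])
          then obtain a b where ab: "(a, b) \<in> E \<union> E\<inverse>" "a \<in> S" "b \<notin> S" by blast
          have bW: "b \<in> W" using ab(1) sub by auto
          have adj: "(b, a) \<in> E \<or> (a, b) \<in> E" using ab(1) by auto
          obtain g where g: "bij_betw g {..<Suc k} (insert b S)" "rnd (Suc k) E g"
            using insertion[OF S(4) S(5) ab(3) ori lt _ n3 S(3) _ ab(2) adj] S(1) bW False by auto
          have "card (insert b S) = Suc k" using finS ab(3) S(2) by simp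
          moreover have "conn (insert b S) E" using conn_insert[OF S(3) ab(2)] adj by blast
          ultimately show ?thesis using g S(1) bW by (intro exI[of _ "insert b S"] exI[of _ g]) auto
        qed
      qed
    qed
  qed
  have cW: "1 \<le> card W" using fin ne by (simp add: Suc_le_eq card_gt_0_iff)
  obtain S f where S: "S \<subseteq> W" "card S = card W" "bij_betw f {..<card W} S" "rnd (card W) E f"
    using claim cW by blast
  have SW: "S = W" using card_subset_eq[OF fin S(1) S(2)] .
  have o: "oriented E" unfolding oriented_def using ori by blast
  have main: "\<forall>i<card W. \<forall>j<card W. \<forall>m<card W.
           (f i, f j) \<in> E \<and> 0 < (m + card W - i) mod card W \<and>
           (m + card W - i) mod card W < (j + card W - i) mod card W
           \<longrightarrow> (f i, f m) \<in> E \<and> (f m, f j) \<in> E"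
  proof (intro allI impI)
    fix i j m
    assume h: "i < card W" "j < card W" "m < card W"
    assume h2: "(f i, f j) \<in> E \<and> 0 < (m + card W - i) mod card W \<and> (m + card W - i) mod card W < (j + card W - i) mod card W"
    then have "cb i m j" using fd_btw[OF h(1) h(3) h(2)] by blast
    then show "(f i, f m) \<in> E \<and> (f m, f j) \<in> E" using rnd_use[OF S(4) h h2[THEN conjunct1]] by blast
  qed
  show ?thesis unfolding round_def using o main S(3) SW by blast
qed



lemma dg_sub: "digraph V A \<Longrightarrow> (a,b) \<in> A \<Longrightarrow> a \<in> V \<and> b \<in> V"
  unfolding digraph_def by blast
lemma dg_irr: "digraph V A \<Longrightarrow> (a,a) \<notin> A"
  unfolding digraph_def by blast

lemma lsd_out: "digraph V A \<Longrightarrow> locally_semicomplete V A \<Longrightarrow> (x,a)\<in>A \<Longrightarrow> (x,b)\<in>A \<Longrightarrow> a \<noteq> b \<Longrightarrow> (a,b)\<in>A \<or> (b,a)\<in>A"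
  unfolding locally_semicomplete_def semicomplete_def outN_def using dg_sub by fastforce
lemma lsd_in: "digraph V A \<Longrightarrow> locally_semicomplete V A \<Longrightarrow> (a,x)\<in>A \<Longrightarrow> (b,x)\<in>A \<Longrightarrow> a \<noteq> b \<Longrightarrow> (a,b)\<in>A \<or> (b,a)\<in>A"
  unfolding locally_semicomplete_def semicomplete_def inN_def using dg_sub by fastforce

lemma homog_in:
  assumes dg: "digraph V A" and ls: "locally_semicomplete V A"
    and sc: "strongly_connected X A" and nm: "\<not> mixed V A X"
    and y: "y \<notin> X" "(y,u) \<in> A" "u \<in> X" and w: "w \<in> X"
  shows "(y,w) \<in> A \<and> (w,y) \<notin> A"
proof -
  have yV: "y \<in> V" using dg_sub[OF dg y(2)] by blast
  have nb: "\<And>z. z \<in> X \<Longrightarrow> (z,y) \<notin> A" using nm yV y unfolding mixed_def by blast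
  have "(w,u) \<in> (A \<inter> X \<times> X)\<^sup>*" using sc w y(3) unfolding strongly_connected_def by blast
  then have "(y,w) \<in> A" using w
  proof (induction rule: converse_rtrancl_induct)
    case base
    then show ?case using y(2) by simp
  next
    case (step a b)
    have ab: "(a,b) \<in> A" "a \<in> X" "b \<in> X" using step.hyps(1) by auto
    have yb: "(y,b) \<in> A" using step.IH ab(3) by blast
    have "y \<noteq> a" using y(1) ab(2) by blast
    then have "(y,a) \<in> A \<or> (a,y) \<in> A" using lsd_in[OF dg ls yb ab(1)] by blast
    then show ?case using nb[OF ab(2)] by blast
  qed
  then show ?thesis using nb[OF w] by blast
qed

lemma homog_out:
  assumes dg: "digraph V A" and ls: "locally_semicomplete V A"
    and sc: "strongly_connected X A" and nm: "\<not> mixed V A X"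
    and y: "y \<notin> X" "(u,y) \<in> A" "u \<in> X" and w: "w \<in> X"
  shows "(w,y) \<in> A \<and> (y,w) \<notin> A"
proof -
  have yV: "y \<in> V" using dg_sub[OF dg y(2)] by blast
  have nb: "\<And>z. z \<in> X \<Longrightarrow> (y,z) \<notin> A" using nm yV y unfolding mixed_def by blast
  have "(u,w) \<in> (A \<inter> X \<times> X)\<^sup>*" using sc w y(3) unfolding strongly_connected_def by blast
  then have "(w,y) \<in> A" using w
  proof (induction rule: rtrancl_induct)
    case base
    then show ?case using y(2) by simp
  next
    case (step a b)
    have ab: "(a,b) \<in> A" "a \<in> X" "b \<in> X" using step.hyps(2) by auto
    have yb: "(a,y) \<in> A" using step.IH ab(2) by blast
    have "y \<noteq> b" using y(1) ab(3) by blast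
    then have "(y,b) \<in> A \<or> (b,y) \<in> A" using lsd_out[OF dg ls yb ab(1)] by blast
    then show ?case using nb[OF ab(3)] by blast
  qed
  then show ?thesis using nb[OF w] by blast
qed

lemma nested:
  assumes dg: "digraph V A" and ls: "locally_semicomplete V A"
    and scX: "strongly_connected X A" and nmX: "\<not> mixed V A X"
    and scY: "strongly_connected Y A" and nmY: "\<not> mixed V A Y"
    and z: "z \<in> X" "z \<in> Y"
  shows "X \<subseteq> Y \<or> Y \<subseteq> X"
proof (rule ccontr)
  assume "\<not> (X \<subseteq> Y \<or> Y \<subseteq> X)"
  then obtain a0 c0 where a0: "a0 \<in> Y" "a0 \<notin> X" and c0: "c0 \<in> X" "c0 \<notin> Y" by blast
  have "(a0, z) \<in> (A \<inter> Y \<times> Y)\<^sup>*" using scY a0 z unfolding strongly_connected_def by blast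
  then have "\<exists>a b. (a,b) \<in> A \<inter> Y \<times> Y \<and> a \<in> -X \<and> b \<notin> -X" by (rule rtrancl_cross) (use a0 z in auto)
  then obtain a b where ab: "(a,b) \<in> A" "a \<in> Y" "b \<in> Y" "a \<notin> X" "b \<in> X" by blast
  have "(c0, z) \<in> (A \<inter> X \<times> X)\<^sup>*" using scX c0 z unfolding strongly_connected_def by blast
  then have "\<exists>a b. (a,b) \<in> A \<inter> X \<times> X \<and> a \<in> -Y \<and> b \<notin> -Y" by (rule rtrancl_cross) (use c0 z in auto)
  then obtain c d where cd: "(c,d) \<in> A" "c \<in> X" "d \<in> X" "c \<notin> Y" "d \<in> Y" by blast
  have 1: "(c,a) \<in> A" using homog_in[OF dg ls scY nmY cd(4) cd(1) cd(5) ab(2)] by blast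
  have 2: "(c,a) \<notin> A" using homog_in[OF dg ls scX nmX ab(4) ab(1) ab(5) cd(2)] by blast
  show False using 1 2 by blast
qed



locale M =
  fixes V :: "'a set" and A :: "('a \<times> 'a) set"
  assumes dg: "digraph V A" and cd: "connected_dg V A" and ls: "locally_semicomplete V A"
    and nm: "\<forall>X. maximal_weak_hub V A X \<longrightarrow> \<not> mixed V A X"
    and ow: "\<forall>v\<in>V. \<exists>x. ((x,v)\<in>A \<and> (v,x)\<notin>A) \<or> ((v,x)\<in>A \<and> (x,v)\<notin>A)"
begin

definition "P = {X. maximal_weak_hub V A X}"

lemma finV: "finite V" using dg unfolding digraph_def by blast

lemma P_sc: "X \<in> P \<Longrightarrow> strongly_connected X A"
  unfolding P_def maximal_weak_hub_def weak_hub_def by blast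
lemma P_sub: "X \<in> P \<Longrightarrow> X \<subseteq> V"
  unfolding P_def maximal_weak_hub_def weak_hub_def by blast
lemma P_nm: "X \<in> P \<Longrightarrow> \<not> mixed V A X"
  using nm unfolding P_def by blast
lemma P_ne: "X \<in> P \<Longrightarrow> X \<noteq> {}"
  using P_sc unfolding strongly_connected_def by blast
lemma P_max: "X \<in> P \<Longrightarrow> weak_hub V A Y \<Longrightarrow> X \<subseteq> Y \<Longrightarrow> Y = X"
  unfolding P_def maximal_weak_hub_def by blast
lemma P_wh: "X \<in> P \<Longrightarrow> weak_hub V A X"
  unfolding P_def maximal_weak_hub_def by blast

lemma single_wh: "v \<in> V \<Longrightarrow> weak_hub V A {v}"
proof -
  assume v: "v \<in> V"
  obtain x where x: "((x,v)\<in>A \<and> (v,x)\<notin>A) \<or> ((v,x)\<in>A \<and> (x,v)\<notin>A)" using ow v by blast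
  have xV: "x \<in> V" using x dg_sub[OF dg] by blast
  have sc: "strongly_connected {v} A" unfolding strongly_connected_def by simp
  show ?thesis unfolding weak_hub_def
    using v sc xV x unfolding inN_def outN_def by blast
qed

lemma cover: "v \<in> V \<Longrightarrow> \<exists>X\<in>P. v \<in> X"
proof -
  assume v: "v \<in> V"
  define H where "H = {X. weak_hub V A X \<and> v \<in> X}"
  have "H \<subseteq> Pow V" unfolding H_def weak_hub_def by blast
  moreover have "finite (Pow V)" using finV by simp
  ultimately have fH: "finite H" by (rule finite_subset)
  have "{v} \<in> H" unfolding H_def using single_wh[OF v] by simp
  then have "H \<noteq> {}" by blast
  from finite_has_maximal[OF fH this] obtain m where m: "m \<in> H" "\<forall>b\<in>H. m \<subseteq> b \<longrightarrow> m = b" by blast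
  have "maximal_weak_hub V A m" unfolding maximal_weak_hub_def
  proof (intro conjI allI impI)
    show "weak_hub V A m" using m(1) unfolding H_def by blast
    fix Y assume Y: "weak_hub V A Y \<and> m \<subseteq> Y"
    then have "Y \<in> H" using m(1) unfolding H_def by blast
    then show "Y = m" using m(2) Y by blast
  qed
  then show ?thesis using m(1) unfolding P_def H_def by blast
qed

lemma disj: "X \<in> P \<Longrightarrow> Y \<in> P \<Longrightarrow> X \<noteq> Y \<Longrightarrow> X \<inter> Y = {}"
proof (rule ccontr)
  assume X: "X \<in> P" and Y: "Y \<in> P" and ne: "X \<noteq> Y" and "X \<inter> Y \<noteq> {}"
  then obtain z where z: "z \<in> X" "z \<in> Y" by blast
  have "X \<subseteq> Y \<or> Y \<subseteq> X" using nested[OF dg ls P_sc[OF X] P_nm[OF X] P_sc[OF Y] P_nm[OF Y] z] .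
  then show False
  proof
    assume "X \<subseteq> Y" then show False using P_max[OF X P_wh[OF Y]] ne by blast
  next
    assume "Y \<subseteq> X" then show False using P_max[OF Y P_wh[OF X]] ne by blast
  qed
qed

lemma complete:
  assumes X: "X \<in> P" and Y: "Y \<in> P" and ne: "X \<noteq> Y" and u: "u \<in> X" and w: "w \<in> Y" and e: "(u,w) \<in> A"
    and u': "u' \<in> X" and w': "w' \<in> Y"
  shows "(u',w') \<in> A \<and> (w',u') \<notin> A"
proof -
  have d: "X \<inter> Y = {}" using disj[OF X Y ne] .
  have uY: "u \<notin> Y" using d u by blast
  have 1: "(u,w') \<in> A" using homog_in[OF dg ls P_sc[OF Y] P_nm[OF Y] uY e w w'] by blast
  have wX: "w' \<notin> X" using d w' by blast
  show ?thesis using homog_out[OF dg ls P_sc[OF X] P_nm[OF X] wX 1 u u'] .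
qed

definition "E = contract_arcs P A"

lemma E_iff: "(X,Y) \<in> E \<longleftrightarrow> X \<in> P \<and> Y \<in> P \<and> X \<noteq> Y \<and> (\<exists>u\<in>X. \<exists>w\<in>Y. (u,w) \<in> A)"
  unfolding E_def contract_arcs_def by simp

lemma E_all: "(X,Y) \<in> E \<Longrightarrow> u \<in> X \<Longrightarrow> w \<in> Y \<Longrightarrow> (u,w) \<in> A \<and> (w,u) \<notin> A"
proof -
  assume e: "(X,Y) \<in> E" and u: "u \<in> X" and w: "w \<in> Y"
  then obtain a b where ab: "a \<in> X" "b \<in> Y" "(a,b) \<in> A" and P: "X \<in> P" "Y \<in> P" "X \<noteq> Y" unfolding E_iff by blast
  show ?thesis by (rule complete[OF P ab u w])
qed

lemma E_ori: "(X,Y) \<in> E \<Longrightarrow> (Y,X) \<notin> E"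
proof
  assume a: "(X,Y) \<in> E" and b: "(Y,X) \<in> E"
  obtain x where x: "x \<in> X" using a P_ne unfolding E_iff by blast
  obtain y where y: "y \<in> Y" using a P_ne unfolding E_iff by blast
  show False using E_all[OF a x y] E_all[OF b y x] by blast
qed

lemma E_ltour: "ltour P E"
  unfolding ltour_def
proof (intro ballI impI)
  fix X Y Z assume X: "X \<in> P" and Y: "Y \<in> P" and Z: "Z \<in> P" and ne: "Y \<noteq> Z"
  assume h: "((X, Y) \<in> E \<and> (X, Z) \<in> E) \<or> ((Y, X) \<in> E \<and> (Z, X) \<in> E)"
  obtain x where x: "x \<in> X" using P_ne[OF X] by blast
  obtain y where y: "y \<in> Y" using P_ne[OF Y] by blast
  obtain z where z: "z \<in> Z" using P_ne[OF Z] by blast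
  have yz: "y \<noteq> z" using disj[OF Y Z ne] y z by blast
  have "(y,z) \<in> A \<or> (z,y) \<in> A"
    using h
  proof
    assume "(X, Y) \<in> E \<and> (X, Z) \<in> E"
    then have "(x,y) \<in> A" "(x,z) \<in> A" using E_all x y z by blast+
    then show ?thesis using lsd_out[OF dg ls _ _ yz] by blast
  next
    assume "(Y, X) \<in> E \<and> (Z, X) \<in> E"
    then have "(y,x) \<in> A" "(z,x) \<in> A" using E_all x y z by blast+
    then show ?thesis using lsd_in[OF dg ls _ _ yz] by blast
  qed
  then show "(Y, Z) \<in> E \<or> (Z, Y) \<in> E" unfolding E_iff using Y Z ne y z by blast
qed

lemma cyc_sc:
  assumes e: "(Y1,Y2) \<in> E" "(Y2,Y3) \<in> E" "(Y3,Y1) \<in> E"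
  shows "strongly_connected (Y1 \<union> Y2 \<union> Y3) A"
proof -
  let ?Z = "Y1 \<union> Y2 \<union> Y3"
  have P: "Y1 \<in> P" "Y2 \<in> P" "Y3 \<in> P" using e unfolding E_iff by blast+
  obtain y1 where y1: "y1 \<in> Y1" using P_ne[OF P(1)] by blast
  obtain y2 where y2: "y2 \<in> Y2" using P_ne[OF P(2)] by blast
  obtain y3 where y3: "y3 \<in> Y3" using P_ne[OF P(3)] by blast
  have arc: "\<And>a b. (a,b) \<in> A \<Longrightarrow> a \<in> ?Z \<Longrightarrow> b \<in> ?Z \<Longrightarrow> (a,b) \<in> (A \<inter> ?Z \<times> ?Z)\<^sup>*" by blast
  have inY: "\<And>Y a b. Y \<in> P \<Longrightarrow> Y \<subseteq> ?Z \<Longrightarrow> a \<in> Y \<Longrightarrow> b \<in> Y \<Longrightarrow> (a,b) \<in> (A \<inter> ?Z \<times> ?Z)\<^sup>*"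
  proof -
    fix Y a b assume Y: "Y \<in> P" "Y \<subseteq> ?Z" "a \<in> Y" "b \<in> Y"
    have "(a,b) \<in> (A \<inter> Y \<times> Y)\<^sup>*" using P_sc[OF Y(1)] Y(3,4) unfolding strongly_connected_def by blast
    moreover have "(A \<inter> Y \<times> Y)\<^sup>* \<subseteq> (A \<inter> ?Z \<times> ?Z)\<^sup>*" by (rule rtrancl_mono) (use Y(2) in blast)
    ultimately show "(a,b) \<in> (A \<inter> ?Z \<times> ?Z)\<^sup>*" by blast
  qed
  have to1: "(u, y1) \<in> (A \<inter> ?Z \<times> ?Z)\<^sup>*" if u: "u \<in> ?Z" for u
  proof -
    consider "u \<in> Y1" | "u \<in> Y2" | "u \<in> Y3" using u by blast
    then show ?thesis
    proof cases
      case 1 then show ?thesis using inY[OF P(1) _ _ y1] by blast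
    next
      case 2
      have "(u,y3) \<in> A" "(y3,y1) \<in> A" using E_all e 2 y1 y3 by blast+
      then have "(u,y3) \<in> (A \<inter> ?Z \<times> ?Z)\<^sup>*" "(y3,y1) \<in> (A \<inter> ?Z \<times> ?Z)\<^sup>*" using arc 2 y1 y3 by blast+
      then show ?thesis by (rule rtrancl_trans)
    next
      case 3
      have "(u,y1) \<in> A" using E_all e 3 y1 by blast
      then show ?thesis using arc 3 y1 by blast
    qed
  qed
  have from1: "(y1, w) \<in> (A \<inter> ?Z \<times> ?Z)\<^sup>*" if w: "w \<in> ?Z" for w
  proof -
    consider "w \<in> Y1" | "w \<in> Y2" | "w \<in> Y3" using w by blast
    then show ?thesis
    proof cases
      case 1 then show ?thesis using inY[OF P(1) _ y1] by blast
    next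
      case 2
      have "(y1,w) \<in> A" using E_all e 2 y1 by blast
      then show ?thesis using arc 2 y1 by blast
    next
      case 3
      have "(y1,y2) \<in> A" "(y2,w) \<in> A" using E_all e 3 y1 y2 by blast+
      then have "(y1,y2) \<in> (A \<inter> ?Z \<times> ?Z)\<^sup>*" "(y2,w) \<in> (A \<inter> ?Z \<times> ?Z)\<^sup>*" using arc 3 y1 y2 by blast+
      then show ?thesis by (rule rtrancl_trans)
    qed
  qed
  show ?thesis unfolding strongly_connected_def
  proof (intro conjI ballI)
    show "?Z \<noteq> {}" using y1 by blast
    fix u w assume "u \<in> ?Z" "w \<in> ?Z"
    show "(u, w) \<in> (A \<inter> ?Z \<times> ?Z)\<^sup>*" using to1[OF \<open>u \<in> ?Z\<close>] from1[OF \<open>w \<in> ?Z\<close>] by (rule rtrancl_trans)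
  qed
qed

lemma E_no3: "no3 E"
  unfolding no3_def
proof (intro conjI allI impI)
  fix X Y1 Y2 Y3
  assume a: "(X, Y1) \<in> E" "(X, Y2) \<in> E" "(X, Y3) \<in> E" and c: "(Y1, Y2) \<in> E" "(Y2, Y3) \<in> E" "(Y3, Y1) \<in> E"
  have P: "X \<in> P" "Y1 \<in> P" "Y2 \<in> P" "Y3 \<in> P" using a c unfolding E_iff by blast+
  obtain x where x: "x \<in> X" using P_ne[OF P(1)] by blast
  have xV: "x \<in> V" using P_sub[OF P(1)] x by blast
  let ?Z = "Y1 \<union> Y2 \<union> Y3"
  have sub: "?Z \<subseteq> outN A x - inN A x" unfolding outN_def inN_def using E_all[OF a(1) x] E_all[OF a(2) x] E_all[OF a(3) x] by blast
  have "weak_hub V A ?Z" unfolding weak_hub_def using P_sub[OF P(2)] P_sub[OF P(3)] P_sub[OF P(4)] cyc_sc[OF c] sub xV by blast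
  then have "?Z = Y1" using P_max[OF P(2)] by blast
  moreover obtain y2 where "y2 \<in> Y2" using P_ne[OF P(3)] by blast
  moreover have "Y1 \<noteq> Y2" using c(1) unfolding E_iff by blast
  ultimately show False using disj[OF P(2) P(3)] by blast
next
  fix X Y1 Y2 Y3
  assume a: "(Y1, X) \<in> E" "(Y2, X) \<in> E" "(Y3, X) \<in> E" and c: "(Y1, Y2) \<in> E" "(Y2, Y3) \<in> E" "(Y3, Y1) \<in> E"
  have P: "X \<in> P" "Y1 \<in> P" "Y2 \<in> P" "Y3 \<in> P" using a c unfolding E_iff by blast+
  obtain x where x: "x \<in> X" using P_ne[OF P(1)] by blast
  have xV: "x \<in> V" using P_sub[OF P(1)] x by blast
  let ?Z = "Y1 \<union> Y2 \<union> Y3"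
  have sub: "?Z \<subseteq> inN A x - outN A x" unfolding outN_def inN_def using E_all[OF a(1) _ x] E_all[OF a(2) _ x] E_all[OF a(3) _ x] by blast
  have "weak_hub V A ?Z" unfolding weak_hub_def using P_sub[OF P(2)] P_sub[OF P(3)] P_sub[OF P(4)] cyc_sc[OF c] sub xV by blast
  then have "?Z = Y1" using P_max[OF P(2)] by blast
  moreover obtain y2 where "y2 \<in> Y2" using P_ne[OF P(3)] by blast
  moreover have "Y1 \<noteq> Y2" using c(1) unfolding E_iff by blast
  ultimately show False using disj[OF P(2) P(3)] by blast
qed

lemma P_union: "\<Union>P = V"
proof
  show "\<Union>P \<subseteq> V" using P_sub by blast
  show "V \<subseteq> \<Union>P"
  proof
    fix v assume "v \<in> V"
    then obtain X where "X \<in> P" "v \<in> X" using cover by blast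
    then show "v \<in> \<Union>P" by blast
  qed
qed

lemma finP: "finite P"
proof -
  have "P \<subseteq> Pow V" using P_sub by blast
  moreover have "finite (Pow V)" using finV by simp
  ultimately show ?thesis by (rule finite_subset)
qed

lemma Vne: "V \<noteq> {}" using cd unfolding connected_dg_def by blast

lemma PneE: "P \<noteq> {}" using Vne cover by blast

lemma E_conn: "connected_dg P E"
  unfolding connected_dg_def
proof (intro conjI ballI)
  show "P \<noteq> {}" by (rule PneE)
  fix X Y assume X: "X \<in> P" and Y: "Y \<in> P"
  obtain x where x: "x \<in> X" using P_ne[OF X] by blast
  obtain y where y: "y \<in> Y" using P_ne[OF Y] by blast
  have xV: "x \<in> V" "y \<in> V" using P_sub X Y x y by blast+
  have "(x,y) \<in> (A \<union> A\<inverse>)\<^sup>*" using cd xV unfolding connected_dg_def by blast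
  then have "\<forall>Z\<in>P. y \<in> Z \<longrightarrow> (X,Z) \<in> (E \<union> E\<inverse>)\<^sup>*"
  proof (induction rule: rtrancl_induct)
    case base
    show ?case
    proof (intro ballI impI)
      fix Z assume "Z \<in> P" "x \<in> Z"
      then have "Z = X" using disj[OF _ X] x by blast
      then show "(X, Z) \<in> (E \<union> E\<inverse>)\<^sup>*" by simp
    qed
  next
    case (step z z')
    have zV: "z \<in> V" using step.hyps(2) dg_sub[OF dg] by blast
    obtain Z where Z: "Z \<in> P" "z \<in> Z" using cover[OF zV] by blast
    have XZ: "(X,Z) \<in> (E \<union> E\<inverse>)\<^sup>*" using step.IH Z by blast
    show ?case
    proof (intro ballI impI)
      fix Z' assume Z': "Z' \<in> P" "z' \<in> Z'"
      show "(X, Z') \<in> (E \<union> E\<inverse>)\<^sup>*"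
      proof (cases "Z = Z'")
        case True then show ?thesis using XZ by simp
      next
        case False
        have "(z,z') \<in> A \<or> (z',z) \<in> A" using step.hyps(2) by blast
        then have "(Z,Z') \<in> E \<union> E\<inverse>"
        proof
          assume "(z,z') \<in> A"
          then have "(Z,Z') \<in> E" unfolding E_iff using Z Z' False by blast
          then show ?thesis by blast
        next
          assume "(z',z) \<in> A"
          then have "(Z',Z) \<in> E" unfolding E_iff using Z Z' False by blast
          then show ?thesis by blast
        qed
        with XZ show ?thesis by (rule rtrancl_into_rtrancl)
      qed
    qed
  qed
  then show "(X,Y) \<in> (E \<union> E\<inverse>)\<^sup>*" using Y y by blast
qed

lemma E_sub: "E \<subseteq> P \<times> P" unfolding E_def contract_arcs_def by blast

lemma E_round: "round P E"
  by (rule round_main[OF finP PneE E_sub E_ori E_ltour E_no3 E_conn])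

lemma cardP: "card P \<ge> 2"
proof (rule ccontr)
  assume "\<not> card P \<ge> 2"
  moreover have "card P \<noteq> 0" using finP PneE by simp
  ultimately have "card P = 1" by simp
  then obtain X where X: "P = {X}" using card_1_singletonE by blast
  then have XV: "X = V" using P_union by simp
  have "weak_hub V A X" using P_wh X by simp
  then obtain x where x: "x \<in> V" "X \<subseteq> inN A x - outN A x \<or> X \<subseteq> outN A x - inN A x" unfolding weak_hub_def by blast
  then have "(x,x) \<in> A" using XV unfolding inN_def outN_def by blast
  then show False using dg_irr[OF dg] by blast
qed

lemma result:
  "\<exists>P :: 'a set set. card P \<ge> 2 \<and> \<Union>P = V \<and>
            (\<forall>X\<in>P. \<forall>Y\<in>P. X \<noteq> Y \<longrightarrow> X \<inter> Y = {}) \<and>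
            (\<forall>X\<in>P. strongly_connected X A) \<and>
            round P (contract_arcs P A)"
  using cardP P_union disj P_sc E_round unfolding E_def by blast

end



lemma left_case:
  assumes dg: "digraph V A" and cd: "connected_dg V A" and ls: "locally_semicomplete V A"
    and v: "v \<in> V" and nv: "\<forall>x. \<not> ((x,v)\<in>A \<and> (v,x)\<notin>A) \<and> \<not> ((v,x)\<in>A \<and> (x,v)\<notin>A)"
  shows "semicomplete V A \<and> (\<exists>x. universal_vertex V A x)"
proof -
  have dig: "\<And>x. (x,v)\<in>A \<longleftrightarrow> (v,x)\<in>A" using nv by blast
  have reach: "z = v \<or> (v,z) \<in> A" if "(v,z) \<in> (A \<union> A\<inverse>)\<^sup>*" for z
    using that
  proof (induction rule: rtrancl_induct)
    case base then show ?case by simp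
  next
    case (step y z)
    show ?case
    proof (cases "y = v")
      case True
      then have "(v,z) \<in> A \<or> (z,v) \<in> A" using step.hyps(2) by blast
      then show ?thesis using dig by blast
    next
      case False
      then have vy: "(v,y) \<in> A" "(y,v) \<in> A" using step.IH dig by blast+
      show ?thesis
      proof (cases "z = v")
        case True then show ?thesis by simp
      next
        case zv: False
        have "(y,z) \<in> A \<or> (z,y) \<in> A" using step.hyps(2) by blast
        then have "(v,z) \<in> A \<or> (z,v) \<in> A"
        proof
          assume "(y,z) \<in> A"
          then show ?thesis using lsd_out[OF dg ls vy(2) _ ] zv by blast
        next
          assume "(z,y) \<in> A"
          then show ?thesis using lsd_in[OF dg ls vy(1) _ ] zv by blast
        qed
        then show ?thesis using dig by blast
      qed
    qed
  qed
  have all: "(v,w) \<in> A \<and> (w,v) \<in> A" if "w \<in> V" "w \<noteq> v" for w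
  proof -
    have "(v,w) \<in> (A \<union> A\<inverse>)\<^sup>*" using cd v that(1) unfolding connected_dg_def by blast
    then have "(v,w) \<in> A" using reach that(2) by blast
    then show ?thesis using dig by blast
  qed
  have irr: "\<And>a. (a,a) \<notin> A" using dg_irr[OF dg] by blast
  have "universal_vertex V A v" unfolding universal_vertex_def
  proof (intro conjI)
    show "v \<in> V" by (rule v)
    show "outN A v = V - {v}"
    proof
      show "outN A v \<subseteq> V - {v}" unfolding outN_def using dg_sub[OF dg] irr by blast
      show "V - {v} \<subseteq> outN A v" unfolding outN_def using all by blast
    qed
    show "inN A v = V - {v}"
    proof
      show "inN A v \<subseteq> V - {v}" unfolding inN_def using dg_sub[OF dg] irr by blast
      show "V - {v} \<subseteq> inN A v" unfolding inN_def using all by blast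
    qed
  qed
  moreover have "semicomplete V A" unfolding semicomplete_def
  proof (intro ballI impI)
    fix x y assume x: "x \<in> V" and y: "y \<in> V" and xy: "x \<noteq> y"
    show "(x,y) \<in> A \<or> (y,x) \<in> A"
    proof (cases "x = v \<or> y = v")
      case True then show ?thesis using all x y xy by blast
    next
      case False
      then have "(v,x) \<in> A" "(v,y) \<in> A" using all x y by blast+
      then show ?thesis using lsd_out[OF dg ls _ _ xy] by blast
    qed
  qed
  ultimately show ?thesis by blast
qed

theorem lemma4p3:
  fixes V :: "'a set" and A :: "('a \<times> 'a) set"
  assumes "digraph V A"
    and "connected_dg V A"
    and "locally_semicomplete V A"
    and "\<forall>X. maximal_weak_hub V A X \<longrightarrow> \<not> mixed V A X"
  shows "(semicomplete V A \<and> (\<exists>x. universal_vertex V A x)) \<or>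
         (\<exists>P :: 'a set set. card P \<ge> 2 \<and> \<Union>P = V \<and>
            (\<forall>X\<in>P. \<forall>Y\<in>P. X \<noteq> Y \<longrightarrow> X \<inter> Y = {}) \<and>
            (\<forall>X\<in>P. strongly_connected X A) \<and>
            round P (contract_arcs P A))"
proof (cases "\<exists>v\<in>V. \<forall>x. \<not> ((x,v)\<in>A \<and> (v,x)\<notin>A) \<and> \<not> ((v,x)\<in>A \<and> (x,v)\<notin>A)")
  case True
  then obtain v where "v \<in> V" "\<forall>x. \<not> ((x,v)\<in>A \<and> (v,x)\<notin>A) \<and> \<not> ((v,x)\<in>A \<and> (x,v)\<notin>A)" by blast
  then have "semicomplete V A \<and> (\<exists>x. universal_vertex V A x)" by (rule left_case[OF assms(1-3)])
  then show ?thesis by (rule disjI1)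
next
  case False
  have ow: "\<forall>v\<in>V. \<exists>x. ((x,v)\<in>A \<and> (v,x)\<notin>A) \<or> ((v,x)\<in>A \<and> (x,v)\<notin>A)"
  proof (intro ballI)
    fix v assume v: "v \<in> V"
    show "\<exists>x. ((x,v)\<in>A \<and> (v,x)\<notin>A) \<or> ((v,x)\<in>A \<and> (x,v)\<notin>A)"
    proof (rule ccontr)
      assume H: "\<not> (\<exists>x. ((x,v)\<in>A \<and> (v,x)\<notin>A) \<or> ((v,x)\<in>A \<and> (x,v)\<notin>A))"
      have "\<forall>x. \<not> ((x,v)\<in>A \<and> (v,x)\<notin>A) \<and> \<not> ((v,x)\<in>A \<and> (x,v)\<notin>A)"
      proof
        fix x show "\<not> ((x,v)\<in>A \<and> (v,x)\<notin>A) \<and> \<not> ((v,x)\<in>A \<and> (x,v)\<notin>A)" using H by blast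
      qed
      with v False show False by blast
    qed
  qed
  interpret M V A
    apply unfold_locales
    using assms ow by simp_all
  show ?thesis using result by (rule disjI2)
qed


end
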